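(* Let $p$ be an odd prime, $a,m\in\mathbb Z_p$ with $m\not\equiv0\pmod p$ and $a\not\equiv0,-1\pmod p$, and put $A_k=\binom ak\binom{-1-a}k\binom{2k}k$. Then $$2a(a+1)\sum_{k=0}^{p-2}\frac{A_k}{m^k(k+1)^2}\equiv(m-4)\sum_{k=0}^{p-1}\frac{kA_k}{m^k}+2\sum_{k=0}^{p-1}\frac{A_k}{m^k}+(4a(a+1)-2)\sum_{k=0}^{p-2}\frac{A_k}{m^k(k+1)}\pmod{p^3}$$ and $$2a(a+1)\sum_{k=0}^{p-2}\frac{A_k}{m^k(k+1)^3}\equiv-m+\Big(2m-8-\frac{m-4}{a(a+1)}\Big)\sum_{k=0}^{p-1}\frac{kA_k}{m^k}+\Big(m-\frac2{a(a+1)}\Big)\sum_{k=0}^{p-1}\frac{A_k}{m^k}+\Big(8a(a+1)-2+\frac2{a(a+1)}\Big)\sum_{k=0}^{p-2}\frac{A_k}{m^k(k+1)}\pmod{p^3}.$$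
   Context: $\mathbb Z_p$ denotes the set of rational numbers whose denominator is not divisible by $p$; for $u,v\in\mathbb Z_p$, $u\equiv v\pmod{p^r}$ means $(u-v)/p^r\in\mathbb Z_p$. For $a$ rational, $\binom a0=1$ and $\binom ak=\frac{a(a-1)\cdots(a-k+1)}{k!}$ for $k\ge1$. *)

theory Defs
  imports Complex_Main "HOL-Computational_Algebra.Primes"
begin

text \<open>Z_p: rationals whose reduced denominator is not divisible by p.\<close>
definition p_integral :: "nat \<Rightarrow> rat \<Rightarrow> bool" where
  "p_integral p x \<longleftrightarrow> \<not> (int p dvd snd (quotient_of x))"

text \<open>u \<equiv> v (mod p^r) for u, v in Z_p: (u - v)/p^r in Z_p.\<close>
definition rcong :: "nat \<Rightarrow> nat \<Rightarrow> rat \<Rightarrow> rat \<Rightarrow> bool" where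
  "rcong p r u v \<longleftrightarrow> p_integral p ((u - v) / of_nat p ^ r)"

definition A_seq :: "rat \<Rightarrow> nat \<Rightarrow> rat" where
  "A_seq a k = (a gchoose k) * ((-1 - a) gchoose k) * of_nat (2*k choose k)"

end

theory Submission
  imports Defs "HOL-Number_Theory.Cong"
begin

declare binomial_Suc_Suc[simp del]

lemma gch_rec: "of_nat (Suc k) * ((x::rat) gchoose Suc k) = (x - of_nat k) * (x gchoose k)"
proof -
  have "of_nat (Suc k) * (x gchoose Suc k) = x * ((x-1) gchoose k)" by (rule gbinomial_absorption)
  also have "\<dots> = (x - of_nat k) * (x gchoose k)" by (rule gbinomial_absorb_comp[symmetric])
  finally show ?thesis .
qed

lemma cb_rec: "(Suc k)^2 * (2 * Suc k choose Suc k) = (2*k+2)*(2*k+1) * (2*k choose k)"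
proof -
  have 1: "Suc k * (Suc (2*k+1) choose Suc k) = Suc (2*k+1) * ((2*k+1) choose k)"
    by (rule Suc_times_binomial)
  have 2: "Suc k * (Suc (2*k) choose Suc k) = Suc k * (Suc (2*k) choose k)"
    using Suc_times_binomial_add[of k k] by (simp add: mult_2)
  have 3: "Suc k * (Suc (2*k) choose Suc k) = Suc (2*k) * ((2*k) choose k)"
    by (rule Suc_times_binomial)
  have 4: "Suc k * ((2*k+1) choose k) = (2*k+1) * (2*k choose k)"
  proof -
    have "Suc k * (Suc (2*k) choose k) = Suc (2*k) * (2*k choose k)" using 2 3 by linarith
    then show ?thesis by simp
  qed
  have "(Suc k)^2 * (2 * Suc k choose Suc k) = Suc k * (Suc k * (Suc (2*k+1) choose Suc k))"
    by (simp add: power2_eq_square algebra_simps)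
  also have "\<dots> = (2*k+2) * (Suc k * ((2*k+1) choose k))" using 1 by simp
  also have "\<dots> = (2*k+2)*(2*k+1) * (2*k choose k)" using 4 by (simp add: algebra_simps)
  finally show ?thesis .
qed

lemma A_rec: "(of_nat k + 1)^3 * A_seq a (Suc k) =
   2*(2*of_nat k+1)*(of_nat k*(of_nat k+1) - a*(a+1)) * A_seq a k"
proof -
  have g1: "(of_nat k + 1) * (a gchoose Suc k) = (a - of_nat k) * (a gchoose k)"
    using gch_rec[of k a] by (simp add: add.commute)
  have g2: "(of_nat k + 1) * ((-1-a) gchoose Suc k) = (-1-a - of_nat k) * ((-1-a) gchoose k)"
    using gch_rec[of k "-1-a"] by (simp add: add.commute)
  have c: "(of_nat k + 1)^2 * (of_nat (2 * Suc k choose Suc k)::rat) = (2*of_nat k+2)*(2*of_nat k+1) * of_nat (2*k choose k)"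
    using arg_cong[OF cb_rec[of k], of "of_nat :: nat \<Rightarrow> rat"] by (simp add: power2_eq_square algebra_simps)
  have "(of_nat k + 1)^3 * A_seq a (Suc k) =
     ((of_nat k + 1) * (a gchoose Suc k)) * ((of_nat k + 1) * ((-1-a) gchoose Suc k)) *
     ((of_nat k + 1)^2 * (of_nat (2 * Suc k choose Suc k)::rat)) / (of_nat k + 1)"
    unfolding A_seq_def by (simp add: power2_eq_square power3_eq_cube field_simps)
  also have "\<dots> = (a - of_nat k) * (a gchoose k) * ((-1-a - of_nat k) * ((-1-a) gchoose k)) *
     ((2*of_nat k+2)*(2*of_nat k+1) * of_nat (2*k choose k)) / (of_nat k + 1)"
    using g1 g2 c by simp
  also have "\<dots> = 2*(2*of_nat k+1)*(of_nat k*(of_nat k+1) - a*(a+1)) * A_seq a k"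
    unfolding A_seq_def by (simp add: field_simps)
  finally show ?thesis .
qed



lemma step1:
  fixes x b m r s :: rat
  assumes e: "m*(x+1)^3*s = 2*(2*x+1)*(x*(x+1)-b)*r" and x: "x+1 \<noteq> 0"
  shows "2*b*r/(x+1)^2 = (m-4)*((x+1)*s) + 2*s + (4*b-2)*(r/(x+1))
     + ((4*(x+1)-2)*s - (4*x-2)*r)"
  using x apply (simp add: field_simps) using e by algebra

lemma step2y:
  fixes y b m r s :: rat
  assumes e: "m*y^3*s = 2*(2*y-1)*((y-1)*y-b)*r" and x: "y \<noteq> 0" and b: "b \<noteq> 0"
  shows "2*b*r/y^3 = (2*m-8-(m-4)/b)*(y*s) + (m-2/b)*s + (8*b-2+2/b)*(r/y)
     + (s*(8*y+(2-4*y)/b) - r*(8*(y-1)+(2-4*(y-1))/b))"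
  using x b apply (simp add: field_simps) using e by algebra

lemma step2:
  fixes x b m r s :: rat
  assumes e: "m*(x+1)^3*s = 2*(2*x+1)*(x*(x+1)-b)*r" and x: "x+1 \<noteq> 0" and b: "b \<noteq> 0"
  shows "2*b*r/(x+1)^3 = (2*m-8-(m-4)/b)*((x+1)*s) + (m-2/b)*s + (8*b-2+2/b)*(r/(x+1))
     + (s*(8*(x+1)+(2-4*(x+1))/b) - r*(8*x+(2-4*x)/b))"
  using step2y[of m "x+1" s b r] e x b by (simp add: algebra_simps)



lemma comb:
  fixes B P Q S T U V D0 D1 rr w s z :: rat
  assumes "B*S = P*T + 2*U + Q*V + D0" and "B*rr = P*w + 2*s + Q*z + (D1 - D0)"
  shows "B*(S+rr) = P*(T + w) + 2*(U+s) + Q*(V+z) + D1"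
  unfolding distrib_left using assms by linarith

lemma id1:
  fixes a m :: rat
  assumes m: "m \<noteq> 0"
  shows "2*a*(a+1)*(\<Sum>k<n. A_seq a k/(m^k*(of_nat k+1)^2)) =
    (m-4)*(\<Sum>k\<le>n. of_nat k*A_seq a k/m^k) + 2*(\<Sum>k\<le>n. A_seq a k/m^k)
    + (4*a*(a+1)-2)*(\<Sum>k<n. A_seq a k/(m^k*(of_nat k+1))) + (4*of_nat n - 2)*(A_seq a n/m^n)"
proof (induction n)
  case 0
  then show ?case by (simp add: A_seq_def)
next
  case (Suc n)
  define r where "r = A_seq a n/m^n"
  define s where "s = A_seq a (Suc n)/m^(Suc n)"
  have mn: "m^n \<noteq> 0" using m by simp
  have e: "m*(of_nat n+1)^3*s = 2*(2*of_nat n+1)*(of_nat n*(of_nat n+1)-a*(a+1))*r"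
    using A_rec[of n a] m mn unfolding r_def s_def by (simp add: field_simps)
  have st: "2*(a*(a+1))*r/(of_nat n+1)^2 = (m-4)*((of_nat n+1)*s) + 2*s + (4*(a*(a+1))-2)*(r/(of_nat n+1))
     + ((4*(of_nat n+1)-2)*s - (4*of_nat n-2)*r)"
    by (rule step1[OF e]) simp
  have t1: "A_seq a n/(m^n*(of_nat n+1)^2) = r/(of_nat n+1)^2" unfolding r_def by simp
  have t2: "of_nat (Suc n)*A_seq a (Suc n)/m^(Suc n) = (of_nat n+1)*s" unfolding s_def by simp
  have t3: "A_seq a (Suc n)/m^(Suc n) = s" unfolding s_def by simp
  have t4: "A_seq a n/(m^n*(of_nat n+1)) = r/(of_nat n+1)" unfolding r_def by simp
  have st': "2*a*(a+1)*(r/(of_nat n+1)^2) = (m-4)*((of_nat n+1)*s) + 2*s + (4*a*(a+1)-2)*(r/(of_nat n+1))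
     + ((4*of_nat (Suc n)-2)*s - (4*of_nat n-2)*r)"
    using st by (simp add: mult.assoc)
  show ?case
    unfolding sum.lessThan_Suc sum.atMost_Suc t1 t2 t3 t4
    by (rule comb[OF Suc.IH[folded r_def] st'])
qed

lemma comb2:
  fixes B P Q R S T U V D0 D1 C0 rr w s z :: rat
  assumes "B*S = C0 + P*T + Q*U + R*V + D0" and "B*rr = P*w + Q*s + R*z + (D1 - D0)"
  shows "B*(S+rr) = C0 + P*(T + w) + Q*(U+s) + R*(V+z) + D1"
  unfolding distrib_left using assms by linarith

lemma id2:
  fixes a m :: rat
  assumes m: "m \<noteq> 0" and b: "a*(a+1) \<noteq> 0"
  shows "2*a*(a+1)*(\<Sum>k<n. A_seq a k/(m^k*(of_nat k+1)^3)) =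
    - m + (2*m-8-(m-4)/(a*(a+1)))*(\<Sum>k\<le>n. of_nat k*A_seq a k/m^k) + (m - 2/(a*(a+1)))*(\<Sum>k\<le>n. A_seq a k/m^k)
    + (8*a*(a+1)-2+2/(a*(a+1)))*(\<Sum>k<n. A_seq a k/(m^k*(of_nat k+1))) + (A_seq a n/m^n)*(8*of_nat n+(2-4*of_nat n)/(a*(a+1)))"
proof (induction n)
  case 0
  then show ?case by (simp add: A_seq_def)
next
  case (Suc n)
  define r where "r = A_seq a n/m^n"
  define s where "s = A_seq a (Suc n)/m^(Suc n)"
  have mn: "m^n \<noteq> 0" using m by simp
  have e: "m*(of_nat n+1)^3*s = 2*(2*of_nat n+1)*(of_nat n*(of_nat n+1)-a*(a+1))*r"
    using A_rec[of n a] m mn unfolding r_def s_def by (simp add: field_simps)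
  have st: "2*(a*(a+1))*r/(of_nat n+1)^3 = (2*m-8-(m-4)/(a*(a+1)))*((of_nat n+1)*s) + (m-2/(a*(a+1)))*s + (8*(a*(a+1))-2+2/(a*(a+1)))*(r/(of_nat n+1))
     + (s*(8*(of_nat n+1)+(2-4*(of_nat n+1))/(a*(a+1))) - r*(8*of_nat n+(2-4*of_nat n)/(a*(a+1))))"
    by (rule step2[OF e _ b]) simp
  have t1: "A_seq a n/(m^n*(of_nat n+1)^3) = r/(of_nat n+1)^3" unfolding r_def by simp
  have t2: "of_nat (Suc n)*A_seq a (Suc n)/m^(Suc n) = (of_nat n+1)*s" unfolding s_def by simp
  have t3: "A_seq a (Suc n)/m^(Suc n) = s" unfolding s_def by simp
  have t4: "A_seq a n/(m^n*(of_nat n+1)) = r/(of_nat n+1)" unfolding r_def by simp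
  have st': "2*a*(a+1)*(r/(of_nat n+1)^3) = (2*m-8-(m-4)/(a*(a+1)))*((of_nat n+1)*s) + (m-2/(a*(a+1)))*s + (8*a*(a+1)-2+2/(a*(a+1)))*(r/(of_nat n+1))
     + (s*(8*of_nat (Suc n)+(2-4*of_nat (Suc n))/(a*(a+1))) - r*(8*of_nat n+(2-4*of_nat n)/(a*(a+1))))"
    using st by (simp add: mult.assoc)
  show ?case
    unfolding sum.lessThan_Suc sum.atMost_Suc t1 t2 t3 t4
    by (rule comb2[OF Suc.IH[folded r_def] st'])
qed



lemma pint_iff:
  assumes p: "prime p"
  shows "p_integral p x \<longleftrightarrow> (\<exists>u v. \<not> int p dvd v \<and> x = of_int u / of_int v)"
proof
  assume h: "p_integral p x"
  obtain n d where q: "quotient_of x = (n, d)" by (cases "quotient_of x")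
  show "\<exists>u v. \<not> int p dvd v \<and> x = of_int u / of_int v"
    using h q quotient_of_div[OF q] unfolding p_integral_def by auto
next
  assume "\<exists>u v. \<not> int p dvd v \<and> x = of_int u / of_int v"
  then obtain u v where v: "\<not> int p dvd v" and x: "x = of_int u / of_int v" by blast
  have v0: "v \<noteq> 0" using v by auto
  obtain n d where q: "quotient_of x = (n, d)" by (cases "quotient_of x")
  have d0: "d > 0" using quotient_of_denom_pos[OF q] .
  have cop: "coprime n d" using quotient_of_coprime[OF q] .
  have "of_int n / of_int d = (of_int u / of_int v :: rat)" using quotient_of_div[OF q, unfolded x] by (rule sym)
  then have "rat_of_int n * rat_of_int v = rat_of_int u * rat_of_int d" using v0 d0 by (simp add: frac_eq_eq)
  then have "rat_of_int (n * v) = rat_of_int (u * d)" by simp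
  then have nv: "n * v = u * d" by (simp only: of_int_eq_iff)
  have pp: "prime (int p)" using p by simp
  show "p_integral p x"
    unfolding p_integral_def q snd_conv
  proof
    assume pd: "int p dvd d"
    then have "int p dvd n * v" unfolding nv by simp
    then have "int p dvd n \<or> int p dvd v" using prime_dvd_mult_iff[OF pp] by simp
    then have "int p dvd n" using v by simp
    then have "is_unit (int p)" using pd by (rule coprime_common_divisor[OF cop])
    then show False using pp not_prime_unit by blast
  qed
qed

lemma pint_intro: "prime p \<Longrightarrow> \<not> int p dvd v \<Longrightarrow> p_integral p (of_int u / of_int v)"
  using pint_iff by blast

lemma pint_elim:
  assumes "prime p" "p_integral p x"
  obtains u v where "\<not> int p dvd v" "x = of_int u / of_int v"
  using pint_iff assms by blast

lemma pint_of_int: "prime p \<Longrightarrow> p_integral p (of_int k)"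
  using pint_intro[of p 1 k] prime_gt_1_nat[of p] by simp

lemma pint_of_nat: "prime p \<Longrightarrow> p_integral p (of_nat k)"
  using pint_of_int[of p "int k"] by simp

lemma pint_add:
  assumes p: "prime p" and x: "p_integral p x" and y: "p_integral p y"
  shows "p_integral p (x + y)"
proof -
  obtain u v where v: "\<not> int p dvd v" "x = of_int u / of_int v" using pint_elim[OF p x] .
  obtain u' v' where v': "\<not> int p dvd v'" "y = of_int u' / of_int v'" using pint_elim[OF p y] .
  have pp: "prime (int p)" using p by simp
  have nd: "\<not> int p dvd v * v'" using v v' prime_dvd_mult_iff[OF pp] by simp
  have e: "x + y = of_int (u*v' + u'*v) / of_int (v*v')"
    using v v' by (cases "v = 0"; cases "v' = 0") (auto simp add: field_simps)
  show ?thesis unfolding e by (rule pint_intro[OF p nd])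
qed

lemma pint_mult:
  assumes p: "prime p" and x: "p_integral p x" and y: "p_integral p y"
  shows "p_integral p (x * y)"
proof -
  obtain u v where v: "\<not> int p dvd v" "x = of_int u / of_int v" using pint_elim[OF p x] .
  obtain u' v' where v': "\<not> int p dvd v'" "y = of_int u' / of_int v'" using pint_elim[OF p y] .
  have pp: "prime (int p)" using p by simp
  have nd: "\<not> int p dvd v * v'" using v v' prime_dvd_mult_iff[OF pp] by simp
  have e: "x * y = of_int (u*u') / of_int (v*v')"
    unfolding v(2) v'(2) by simp
  show ?thesis unfolding e by (rule pint_intro[OF p nd])
qed

lemma pint_uminus:
  assumes p: "prime p" and x: "p_integral p x"
  shows "p_integral p (- x)"
  using pint_mult[OF p pint_of_int[OF p, of "-1"] x] by simp

lemma pint_diff: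
  assumes p: "prime p" and x: "p_integral p x" and y: "p_integral p y"
  shows "p_integral p (x - y)"
  using pint_add[OF p x pint_uminus[OF p y]] by simp

lemma pint_power:
  assumes p: "prime p" and x: "p_integral p x"
  shows "p_integral p (x ^ n)"
  by (induction n) (auto intro: pint_mult[OF p x] pint_of_int[OF p, of 1, simplified])

lemma pint_prod:
  assumes p: "prime p" and x: "\<And>i. i \<in> S \<Longrightarrow> p_integral p (f i)"
  shows "p_integral p (prod f S)"
  using x
proof (induction S rule: infinite_finite_induct)
  case (infinite A) then show ?case using pint_of_int[OF p, of 1] by simp
next
  case empty then show ?case using pint_of_int[OF p, of 1] by simp
next
  case (insert i F) then show ?case by (simp add: pint_mult[OF p])
qed

lemma pint_inv_nat:
  assumes p: "prime p" and "\<not> p dvd k"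
  shows "p_integral p (1 / of_nat k)"
  using pint_intro[OF p, of "int k" 1] assms(2) by simp

lemma pint_unit_inv:
  assumes p: "prime p" and x: "p_integral p x" and nx: "\<not> p_integral p (x / of_nat p)"
  shows "p_integral p (1 / x)"
proof -
  obtain u v where v: "\<not> int p dvd v" "x = of_int u / of_int v" using pint_elim[OF p x] .
  have u: "\<not> int p dvd u"
  proof
    assume "int p dvd u"
    then obtain q where q: "u = int p * q" by auto
    have "x / of_nat p = of_int q / of_int v" using v q p by (simp add: prime_gt_0_nat)
    then show False using nx pint_intro[OF p v(1)] by simp
  qed
  have "1 / x = of_int v / of_int u" using v by simp
  then show ?thesis using pint_intro[OF p u] by simp
qed



lemma A_vanish:
  assumes p: "prime p" and odd: "odd p" and a: "p_integral p a"
    and na: "\<not> p_integral p (a / of_nat p)" and na1: "\<not> p_integral p ((a+1) / of_nat p)"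
  shows "p_integral p (A_seq a (p-1) / of_nat p ^ 3)"
proof -
  define n where "n = p - 1"
  have p2: "p \<ge> 2" using prime_ge_2_nat[OF p] .
  have p3: "p \<ge> 3" using p2 odd by presburger
  have pp: "prime (int p)" using p by simp
  have p0: "(of_nat p :: rat) \<noteq> 0" using p2 by simp
  obtain u v where v: "\<not> int p dvd v" and av: "a = of_int u / of_int v" using pint_elim[OF p a] .
  have v0: "v \<noteq> 0" using v by auto
  have u: "\<not> int p dvd u"
  proof
    assume "int p dvd u"
    then obtain q where q: "u = int p * q" by auto
    have "a / of_nat p = of_int q / of_int v" using av q p0 by simp
    then show False using na pint_intro[OF p v] by simp
  qed
  have cop: "coprime v (int p)" using prime_imp_coprime[OF pp v] by (simp add: coprime_commute)
  obtain w where w: "[v * w = 1] (mod int p)" using cong_solve_coprime_int[OF cop] by blast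
  have w': "int p dvd (v * w - 1)" using w by (simp add: cong_iff_dvd_diff)
  define c where "c = (u * w) mod int p"
  have c0: "0 \<le> c" "c < int p" unfolding c_def using p2 by auto
  have hc: "int p dvd (u - c * v)"
  proof -
    have "u - c * v = - u * (v * w - 1) + int p * ((u * w) div int p) * v"
      unfolding c_def by (simp add: algebra_simps minus_mod_eq_mult_div [symmetric])
    then show ?thesis using w' by simp
  qed
  then obtain q where q: "u - c * v = int p * q" by auto
  have cn0: "c \<noteq> 0" using hc u by auto
  have cn1: "c \<noteq> int p - 1"
  proof
    assume h: "c = int p - 1"
    have "u + v = (c + 1) * v + int p * q" using q by (simp add: algebra_simps)
    also have "\<dots> = int p * (q + v)" using h by (simp add: algebra_simps)
    finally have "u + v = int p * (q + v)" .
    then have "(a + 1) / of_nat p = of_int (q + v) / of_int v" using av v0 p0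
      by (simp add: field_simps) (metis of_int_add of_int_mult of_int_of_nat_eq)
    then show False using na1 pint_intro[OF p v, of "q + v"] by (simp del: of_int_add)
  qed
  define i where "i = nat c"
  have ic: "of_nat i = c" unfolding i_def using c0 by simp
  have i1: "1 \<le> i" "i < n" unfolding n_def using c0 cn0 cn1 ic by linarith+
  have ai: "(a - of_nat i) / of_nat p = of_int q / of_int v"
  proof -
    have "(of_nat i :: rat) = of_int c" using ic by (metis of_int_of_nat_eq)
    then have "a - of_nat i = (of_int u - of_int c * of_int v) / of_int v" using av v0 by (simp add: field_simps)
    also have "\<dots> = of_int (int p * q) / of_int v" using q by (metis of_int_diff of_int_mult)
    finally show ?thesis using p0 v0 by (simp add: field_simps)
  qed
  have pai: "p_integral p ((a - of_nat i) / of_nat p)" unfolding ai by (rule pint_intro[OF p v])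
  define j where "j = n - i"
  have j: "j < n" unfolding j_def using i1 by simp
  have aj: "((-1-a) - of_nat j) / of_nat p = - ((a - of_nat i) / of_nat p) - 1"
  proof -
    have "(of_nat j :: rat) = of_nat p - 1 - of_nat i" unfolding j_def n_def using i1 p2
      by (simp add: of_nat_diff n_def)
    then show ?thesis using p0 by (simp add: field_simps)
  qed
  have paj: "p_integral p (((-1-a) - of_nat j) / of_nat p)"
    unfolding aj by (intro pint_diff[OF p] pint_uminus[OF p] pai pint_of_int[OF p, of 1, simplified])
  define P1 where "P1 = (\<Prod>k = 0..<n. a - of_nat k)"
  define P2 where "P2 = (\<Prod>k = 0..<n. (-1-a) - of_nat k)"
  have P1: "P1 / of_nat p = ((a - of_nat i) / of_nat p) * (\<Prod>k \<in> {0..<n} - {i}. a - of_nat k)"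
    unfolding P1_def using i1 by (simp add: prod.remove[of "{0..<n}" i])
  have P2: "P2 / of_nat p = (((-1-a) - of_nat j) / of_nat p) * (\<Prod>k \<in> {0..<n} - {j}. (-1-a) - of_nat k)"
    unfolding P2_def using j by (simp add: prod.remove[of "{0..<n}" j])
  have iP1: "p_integral p (P1 / of_nat p)"
    unfolding P1 by (intro pint_mult[OF p] pai pint_prod[OF p] pint_diff[OF p] a pint_of_nat[OF p])
  have iP2: "p_integral p (P2 / of_nat p)"
    unfolding P2 by (intro pint_mult[OF p] paj pint_prod[OF p] pint_diff[OF p] pint_uminus[OF p] a pint_of_nat[OF p]
       pint_of_int[OF p, of 1, simplified])
  have fn: "\<not> p dvd fact n" using prime_dvd_fact_iff[OF p, of n] unfolding n_def using p2 by simp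
  have "p dvd fact (2*n)" using prime_dvd_fact_iff[OF p, of "2*n"] unfolding n_def using p3 by simp
  moreover have "fact n * fact n * (2*n choose n) = fact (2*n)"
    using binomial_fact_lemma[of n "2*n"] by simp
  ultimately have "p dvd fact n * fact n * (2*n choose n)" by simp
  then have "p dvd (2*n choose n)" using fn prime_dvd_mult_iff[OF p] by simp
  then obtain C where C: "(2*n choose n) = p * C" by auto
  have g1: "a gchoose n = P1 / fact n" unfolding P1_def using gbinomial_mult_fact[of n a]
    by (simp add: field_simps)
  have g2: "(-1-a) gchoose n = P2 / fact n" unfolding P2_def using gbinomial_mult_fact[of n "-1-a"]
    by (simp add: field_simps)
  have fn0: "(fact n :: rat) \<noteq> 0" by simp
  have eq: "A_seq a n / of_nat p ^ 3 = (P1 / of_nat p) * (P2 / of_nat p) * of_nat C * (1 / of_nat (fact n)) * (1 / of_nat (fact n))"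
    unfolding A_seq_def g1 g2 C using p0 fn0 by (simp add: field_simps power3_eq_cube)
  have "p_integral p (A_seq a n / of_nat p ^ 3)"
    unfolding eq by (intro pint_mult[OF p] iP1 iP2 pint_of_nat[OF p] pint_inv_nat[OF p fn])
  then show ?thesis unfolding n_def .
qed

declare binomial_Suc_Suc[simp]

theorem theorem4p1:
  fixes p :: nat and a m :: rat
  assumes "prime p" and "odd p"
    and "p_integral p a" and "p_integral p m"
    and "\<not> rcong p 1 m 0"
    and "\<not> rcong p 1 a 0" and "\<not> rcong p 1 a (-1)"
  shows
   "rcong p 3
      (2 * a * (a + 1) * (\<Sum>k=0..p-2. A_seq a k / (m ^ k * (of_nat k + 1) ^ 2)))
      ((m - 4) * (\<Sum>k=0..p-1. of_nat k * A_seq a k / m ^ k)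
        + 2 * (\<Sum>k=0..p-1. A_seq a k / m ^ k)
        + (4 * a * (a + 1) - 2) * (\<Sum>k=0..p-2. A_seq a k / (m ^ k * (of_nat k + 1))))
    \<and>
    rcong p 3
      (2 * a * (a + 1) * (\<Sum>k=0..p-2. A_seq a k / (m ^ k * (of_nat k + 1) ^ 3)))
      (- m
        + (2 * m - 8 - (m - 4) / (a * (a + 1))) * (\<Sum>k=0..p-1. of_nat k * A_seq a k / m ^ k)
        + (m - 2 / (a * (a + 1))) * (\<Sum>k=0..p-1. A_seq a k / m ^ k)
        + (8 * a * (a + 1) - 2 + 2 / (a * (a + 1)))
            * (\<Sum>k=0..p-2. A_seq a k / (m ^ k * (of_nat k + 1))))"
proof -
  define n where "n = p - 1"
  have p2: "p \<ge> 2" using prime_ge_2_nat[OF assms(1)] .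
  have p3: "p \<ge> 3" using p2 assms(2) by presburger
  have p: "prime p" by fact
  have p0: "(of_nat p :: rat) \<noteq> 0" using p2 by simp
  have nm: "\<not> p_integral p (m / of_nat p)" using assms(5) unfolding rcong_def by simp
  have na: "\<not> p_integral p (a / of_nat p)" using assms(6) unfolding rcong_def by simp
  have na1: "\<not> p_integral p ((a + 1) / of_nat p)" using assms(7) unfolding rcong_def by simp
  have m0: "m \<noteq> 0" using nm pint_of_int[OF p, of 0] by auto
  have a0: "a \<noteq> 0" using na pint_of_int[OF p, of 0] by auto
  have a10: "a + 1 \<noteq> 0" using na1 pint_of_int[OF p, of 0] by auto
  have b0: "a * (a + 1) \<noteq> 0" using a0 a10 by simp
  have im: "p_integral p (1 / m)" by (rule pint_unit_inv[OF p assms(4) nm])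
  have ia: "p_integral p (1 / a)" by (rule pint_unit_inv[OF p assms(3) na])
  have ia1: "p_integral p (1 / (a + 1))"
    by (rule pint_unit_inv[OF p pint_add[OF p assms(3) pint_of_int[OF p, of 1, simplified]] na1])
  have AV: "p_integral p (A_seq a n / of_nat p ^ 3)" unfolding n_def
    by (rule A_vanish[OF p assms(2) assms(3) na na1])
  have s1: "{0..p-2} = {..<n}" unfolding n_def using p3 by auto
  have s2: "{0..n} = {..n}" by auto
  note I1 = id1[OF m0, of a n]
  note I2 = id2[OF m0 b0, of n]
  show ?thesis
    unfolding rcong_def s1 n_def[symmetric] s2
  proof
    let ?L = "2 * a * (a + 1) * (\<Sum>k<n. A_seq a k / (m ^ k * (of_nat k + 1) ^ 2))"
    let ?R = "(m - 4) * (\<Sum>k\<le>n. of_nat k * A_seq a k / m ^ k)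
        + 2 * (\<Sum>k\<le>n. A_seq a k / m ^ k)
        + (4 * a * (a + 1) - 2) * (\<Sum>k<n. A_seq a k / (m ^ k * (of_nat k + 1)))"
    have "(?L - ?R) / of_nat p ^ 3 = (4 * of_nat n - 2) * (A_seq a n / of_nat p ^ 3) * (1 / m) ^ n"
      using I1 by (simp add: field_simps)
    moreover have "p_integral p ((4 * of_nat n - 2) * (A_seq a n / of_nat p ^ 3) * (1 / m) ^ n)"
      by (intro pint_mult[OF p] pint_diff[OF p] pint_of_nat[OF p] AV pint_power[OF p] im)
        (use pint_of_nat[OF p, of 4] pint_of_nat[OF p, of 2] in simp_all)
    ultimately show "p_integral p ((?L - ?R) / of_nat p ^ 3)" by (simp only:)
  next
    let ?L = "2 * a * (a + 1) * (\<Sum>k<n. A_seq a k / (m ^ k * (of_nat k + 1) ^ 3))"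
    let ?R = "- m + (2 * m - 8 - (m - 4) / (a * (a + 1))) * (\<Sum>k\<le>n. of_nat k * A_seq a k / m ^ k)
        + (m - 2 / (a * (a + 1))) * (\<Sum>k\<le>n. A_seq a k / m ^ k)
        + (8 * a * (a + 1) - 2 + 2 / (a * (a + 1)))
            * (\<Sum>k<n. A_seq a k / (m ^ k * (of_nat k + 1)))"
    have "(?L - ?R) / of_nat p ^ 3 = (A_seq a n / of_nat p ^ 3) * (1 / m) ^ n * (8 * of_nat n + (2 - 4 * of_nat n) * (1 / a) * (1 / (a + 1)))"
    proof -
      have "?L - ?R = (A_seq a n / m ^ n) * (8 * of_nat n + (2 - 4 * of_nat n) / (a * (a + 1)))"
        using I2 by linarith
      also have "\<dots> / of_nat p ^ 3 = (A_seq a n / of_nat p ^ 3) * (1 / m) ^ n * (8 * of_nat n + (2 - 4 * of_nat n) * (1 / a) * (1 / (a + 1)))"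
        using a0 a10 m0 p0 by (simp add: field_simps)
      finally show ?thesis .
    qed
    moreover have "p_integral p ((A_seq a n / of_nat p ^ 3) * (1 / m) ^ n * (8 * of_nat n + (2 - 4 * of_nat n) * (1 / a) * (1 / (a + 1))))"
      by (intro pint_mult[OF p] pint_add[OF p] pint_diff[OF p] pint_of_nat[OF p] AV pint_power[OF p] im ia ia1)
        (use pint_of_nat[OF p, of 4] pint_of_nat[OF p, of 2] pint_of_nat[OF p, of 8] in simp_all)
    ultimately show "p_integral p ((?L - ?R) / of_nat p ^ 3)" by (simp only:)
  qed
qed

end
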